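(* There exists a strongly complete profinite group $Q$ (i.e. every subgroup of finite index in $Q$ is open) in which the derived subgroup $Q'$ is not closed.
   Context: $Q'$ denotes the abstract derived subgroup of $Q$, i.e. the subgroup generated algebraically by all commutators $[x,y]$, $x,y\in Q$. *)

theory Defs
  imports "HOL-Analysis.Analysis" "HOL-Algebra.Algebra"
begin

definition topological_group :: "('a, 'b) monoid_scheme \<Rightarrow> 'a topology \<Rightarrow> bool" where
  "topological_group G T \<longleftrightarrow>
     group G \<and> topspace T = carrier G \<and>
     continuous_map (prod_topology T T) T (\<lambda>(x, y). x \<otimes>\<^bsub>G\<^esub> y) \<and>
     continuous_map T T (\<lambda>x. inv\<^bsub>G\<^esub> x)"

definition totally_disconnected_space :: "'a topology \<Rightarrow> bool" where
  "totally_disconnected_space T \<longleftrightarrow>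
     (\<forall>S. S \<subseteq> topspace T \<and> connectedin T S \<longrightarrow> (\<exists>a. S \<subseteq> {a}))"

definition profinite_group :: "('a, 'b) monoid_scheme \<Rightarrow> 'a topology \<Rightarrow> bool" where
  "profinite_group G T \<longleftrightarrow>
     topological_group G T \<and> compact_space T \<and> Hausdorff_space T \<and>
     totally_disconnected_space T"

definition strongly_complete :: "('a, 'b) monoid_scheme \<Rightarrow> 'a topology \<Rightarrow> bool" where
  "strongly_complete G T \<longleftrightarrow>
     (\<forall>H. subgroup H G \<and> finite (rcosets\<^bsub>G\<^esub> H) \<longrightarrow> openin T H)"

end

theory Submission
  imports Defs "HOL-Number_Theory.Number_Theory"
begin

type_synonym comp = "(nat \<Rightarrow> int) \<times> (nat \<Rightarrow> int) \<times> (nat \<times> nat \<Rightarrow> int)"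

definition Vs :: "int \<Rightarrow> nat \<Rightarrow> (nat \<Rightarrow> int) set" where
  "Vs p n = {x. (\<forall>i. 0 \<le> x i \<and> x i < p) \<and> (\<forall>i\<ge>n. x i = 0)}"
definition Zs :: "int \<Rightarrow> nat \<Rightarrow> (nat \<times> nat \<Rightarrow> int) set" where
  "Zs p n = {z. (\<forall>q. 0 \<le> z q \<and> z q < p) \<and> (\<forall>i j. n \<le> i \<or> n \<le> j \<longrightarrow> z (i,j) = 0)}"

definition rmul :: "comp \<Rightarrow> comp \<Rightarrow> comp" where
  "rmul a b = (case a of (x,y,z) \<Rightarrow> case b of (x',y',z') \<Rightarrow>
     (\<lambda>i. x i + x' i, \<lambda>i. y i + y' i, \<lambda>q. z q + z' q + x (fst q) * y' (snd q)))"
definition rinv :: "comp \<Rightarrow> comp" where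
  "rinv a = (case a of (x,y,z) \<Rightarrow> (\<lambda>i. - x i, \<lambda>i. - y i, \<lambda>q. - z q + x (fst q) * y (snd q)))"
definition red :: "int \<Rightarrow> comp \<Rightarrow> comp" where
  "red p a = (case a of (x,y,z) \<Rightarrow> (\<lambda>i. x i mod p, \<lambda>i. y i mod p, \<lambda>q. z q mod p))"
definition rone :: comp where "rone = (\<lambda>_. 0, \<lambda>_. 0, \<lambda>_. 0)"

definition CG :: "int \<Rightarrow> nat \<Rightarrow> comp monoid" where
  "CG p n = \<lparr>carrier = Vs p n \<times> Vs p n \<times> Zs p n, mult = (\<lambda>a b. red p (rmul a b)), one = rone\<rparr>"

lemma mc: "[a mod p = (a::int)] (mod p)" by (simp add: cong_def)
lemma mc2: "[a = (a::int) mod p] (mod p)" by (simp add: cong_def)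
lemmas congI = cong_add cong_mult cong_diff cong_minus_minus_iff[THEN iffD2] mc mc2 cong_refl

lemma red_rmul1: "red p (rmul (red p a) b) = red p (rmul a b)"
  by (cases a; cases b) (simp add: red_def rmul_def fun_eq_iff mod_simps, (intro allI)?, (simp only: cong_def[symmetric]), (intro congI)+)
lemma red_rmul2: "red p (rmul a (red p b)) = red p (rmul a b)"
  by (cases a; cases b) (simp add: red_def rmul_def fun_eq_iff mod_simps, (intro allI)?, (simp only: cong_def[symmetric]), (intro congI)+)
lemma red_red[simp]: "red p (red p a) = red p a"
  by (cases a) (simp add: red_def)
lemma red_rinv: "red p (rinv (red p a)) = red p (rinv a)"
  by (cases a) (simp add: red_def rinv_def fun_eq_iff mod_simps, (intro allI)?, (simp only: cong_def[symmetric]), (intro congI)+)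
lemma rmul_assoc: "rmul (rmul a b) c = rmul a (rmul b c)"
  by (cases a; cases b; cases c) (simp add: rmul_def fun_eq_iff algebra_simps)
lemma rmul_rone[simp]: "rmul rone a = a" "rmul a rone = a"
  by (cases a; simp add: rmul_def rone_def)+
lemma rinv_l: "rmul (rinv a) a = rone"
  by (cases a) (simp add: rmul_def rinv_def rone_def fun_eq_iff algebra_simps)
lemma rinv_r: "rmul a (rinv a) = rone"
  by (cases a) (simp add: rmul_def rinv_def rone_def fun_eq_iff algebra_simps)

lemma red_carrier: "a \<in> carrier (CG p n) \<Longrightarrow> red p a = a"
  by (cases a) (auto simp: CG_def red_def Vs_def Zs_def fun_eq_iff)


lemma Vs_mod: "p > 0 \<Longrightarrow> (\<forall>i\<ge>n. x i = 0) \<Longrightarrow> (\<lambda>i. x i mod p) \<in> Vs p n"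
  by (simp add: Vs_def)
lemma Zs_mod: "p > 0 \<Longrightarrow> (\<forall>i j. n \<le> i \<or> n \<le> j \<longrightarrow> z (i,j) = 0) \<Longrightarrow> (\<lambda>q. z q mod p) \<in> Zs p n"
  by (simp add: Zs_def)

lemma CG_mult_closed: assumes "p > 0" "a \<in> carrier (CG p n)" "b \<in> carrier (CG p n)"
  shows "red p (rmul a b) \<in> carrier (CG p n)"
  using assms by (cases a; cases b) (auto simp: CG_def red_def rmul_def Vs_def Zs_def)

lemma CG_rinv_closed: assumes "p > 0" "a \<in> carrier (CG p n)"
  shows "red p (rinv a) \<in> carrier (CG p n)"
  using assms by (cases a) (auto simp: CG_def red_def rinv_def Vs_def Zs_def)

lemma CG_group: assumes "p > 0" shows "group (CG p n)"
proof (rule groupI)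
  fix a b assume "a \<in> carrier (CG p n)" "b \<in> carrier (CG p n)"
  then show "a \<otimes>\<^bsub>CG p n\<^esub> b \<in> carrier (CG p n)"
    using assms CG_mult_closed by (simp add: CG_def)
next
  show "\<one>\<^bsub>CG p n\<^esub> \<in> carrier (CG p n)" using assms by (auto simp: CG_def Vs_def Zs_def rone_def)
next
  fix a b c assume "a \<in> carrier (CG p n)" "b \<in> carrier (CG p n)" "c \<in> carrier (CG p n)"
  then show "a \<otimes>\<^bsub>CG p n\<^esub> b \<otimes>\<^bsub>CG p n\<^esub> c = a \<otimes>\<^bsub>CG p n\<^esub> (b \<otimes>\<^bsub>CG p n\<^esub> c)"
    by (simp add: CG_def red_rmul1 red_rmul2 rmul_assoc)
next
  fix a assume "a \<in> carrier (CG p n)"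
  then show "\<one>\<^bsub>CG p n\<^esub> \<otimes>\<^bsub>CG p n\<^esub> a = a"
    using red_carrier by (simp add: CG_def)
next
  fix a assume a: "a \<in> carrier (CG p n)"
  show "\<exists>b\<in>carrier (CG p n). b \<otimes>\<^bsub>CG p n\<^esub> a = \<one>\<^bsub>CG p n\<^esub>"
  proof (intro bexI)
    show "red p (rinv a) \<otimes>\<^bsub>CG p n\<^esub> a = \<one>\<^bsub>CG p n\<^esub>"
      using a by (simp add: CG_def red_rmul1 rinv_l) (simp add: red_def rone_def)
    show "red p (rinv a) \<in> carrier (CG p n)"
      using a assms CG_rinv_closed by blast
  qed
qed

lemma CG_inv: assumes "p > 0" "a \<in> carrier (CG p n)" shows "inv\<^bsub>CG p n\<^esub> a = red p (rinv a)"
proof (rule group.inv_equality[OF CG_group[OF assms(1)]])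
  show "red p (rinv a) \<otimes>\<^bsub>CG p n\<^esub> a = \<one>\<^bsub>CG p n\<^esub>"
      using assms by (simp add: CG_def red_rmul1 rinv_l) (simp add: red_def rone_def)
qed (use assms CG_rinv_closed in auto)


definition FS :: "'i set \<Rightarrow> int \<Rightarrow> ('i \<Rightarrow> int) set" where
  "FS A p = {f. (\<forall>q. 0 \<le> f q \<and> f q < p) \<and> (\<forall>q. q \<notin> A \<longrightarrow> f q = 0)}"

lemma card_FS: assumes "finite A" "p > 0" shows "card (FS A p) = nat p ^ card A"
proof -
  have "bij_betw (\<lambda>f. restrict f A) (FS A p) (PiE A (\<lambda>_. {0..<p}))"
  proof (rule bij_betw_byWitness[where f' = "\<lambda>g q. if q \<in> A then g q else 0"])
    show "\<forall>a\<in>FS A p. (\<lambda>q. if q \<in> A then restrict a A q else 0) = a"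
      by (auto simp: FS_def fun_eq_iff)
    show "\<forall>a'\<in>Pi\<^sub>E A (\<lambda>_. {0..<p}). restrict (\<lambda>q. if q \<in> A then a' q else 0) A = a'"
      by (auto simp: PiE_def extensional_def fun_eq_iff)
    show "(\<lambda>f. restrict f A) ` FS A p \<subseteq> Pi\<^sub>E A (\<lambda>_. {0..<p})"
      by (auto simp: FS_def)
    show "(\<lambda>g q. if q \<in> A then g q else 0) ` Pi\<^sub>E A (\<lambda>_. {0..<p}) \<subseteq> FS A p"
      using assms by (auto simp: FS_def PiE_def Pi_def)
  qed
  then have "card (FS A p) = card (PiE A (\<lambda>_. {0..<p}))" by (rule bij_betw_same_card)
  also have "\<dots> = nat p ^ card A" using assms by (simp add: card_PiE)
  finally show ?thesis .
qed

lemma finite_FS: assumes "finite A" "p > 0" shows "finite (FS A p)"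
proof -
  have "FS A p \<subseteq> (\<lambda>g q. if q \<in> A then g q else 0) ` PiE A (\<lambda>_. {0..<p})"
  proof
    fix f assume "f \<in> FS A p"
    then show "f \<in> (\<lambda>g q. if q \<in> A then g q else 0) ` PiE A (\<lambda>_. {0..<p})"
      by (intro image_eqI[where x="restrict f A"]) (auto simp: FS_def fun_eq_iff)
  qed
  then show ?thesis using assms by (meson finite_PiE finite_atLeastLessThan_int finite_imageI finite_subset)
qed

lemma Vs_FS: "Vs p n = FS {..<n} p" by (auto simp: Vs_def FS_def not_less)
lemma Zs_FS: "Zs p n = FS ({..<n} \<times> {..<n}) p" by (auto simp: Zs_def FS_def not_less)

definition rcomm :: "comp \<Rightarrow> comp \<Rightarrow> comp" where
  "rcomm a b = (case a of (x,y,z) \<Rightarrow> case b of (x',y',z') \<Rightarrow>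
     (\<lambda>_. 0, \<lambda>_. 0, \<lambda>q. x (fst q) * y' (snd q) - x' (fst q) * y (snd q)))"

lemma raw_comm: "rmul (rmul (rmul a b) (rinv a)) (rinv b) = rcomm a b"
  by (cases a; cases b) (simp add: rmul_def rinv_def rcomm_def fun_eq_iff algebra_simps)

lemma CG_comm: assumes "p > 0" "a \<in> carrier (CG p n)" "b \<in> carrier (CG p n)"
  shows "a \<otimes>\<^bsub>CG p n\<^esub> b \<otimes>\<^bsub>CG p n\<^esub> inv\<^bsub>CG p n\<^esub> a \<otimes>\<^bsub>CG p n\<^esub> inv\<^bsub>CG p n\<^esub> b
         = red p (rcomm a b)"
  using assms by (simp add: CG_inv) (simp add: CG_def red_rmul1 red_rmul2 raw_comm)

lemma red_rmul_parts:
  "fst (red p (rmul u v)) = (\<lambda>i. (fst u i + fst v i) mod p)"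
  "fst (snd (red p (rmul u v))) = (\<lambda>i. (fst (snd u) i + fst (snd v) i) mod p)"
  "snd (snd (red p (rmul u v))) = (\<lambda>q. (snd (snd u) q + snd (snd v) q + fst u (fst q) * fst (snd v) (snd q)) mod p)"
  by (cases u; cases v; simp add: red_def rmul_def)+

lemma CG_one: "\<one>\<^bsub>CG p n\<^esub> = (\<lambda>_. 0, \<lambda>_. 0, \<lambda>_. 0)" by (simp add: CG_def rone_def)

lemma CG_pow_fst: assumes "p > 0" "a \<in> carrier (CG p n)"
  shows "fst (a [^]\<^bsub>CG p n\<^esub> k) = (\<lambda>i. (int k * fst a i) mod p) \<and>
         fst (snd (a [^]\<^bsub>CG p n\<^esub> k)) = (\<lambda>i. (int k * fst (snd a) i) mod p)"
proof (induction k)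
  case 0 then show ?case by (simp add: CG_one)
next
  case (Suc k)
  have "a [^]\<^bsub>CG p n\<^esub> Suc k = red p (rmul (a [^]\<^bsub>CG p n\<^esub> k) a)"
    by (simp add: CG_def)
  then show ?case unfolding red_rmul_parts using Suc.IH
    by (simp add: red_rmul_parts fun_eq_iff mod_add_left_eq mod_add_right_eq distrib_right add.commute)
qed

lemma CG_pow_center: assumes "p > 0" "(\<lambda>_. 0, \<lambda>_. 0, z) \<in> carrier (CG p n)"
  shows "(\<lambda>_. 0, \<lambda>_. 0, z) [^]\<^bsub>CG p n\<^esub> k = (\<lambda>_. 0, \<lambda>_. 0, \<lambda>q. (int k * z q) mod p)"
proof (induction k)
  case 0 then show ?case by (simp add: CG_one)
next
  case (Suc k)
  then show ?case 
    by (simp add: CG_def red_def rmul_def fun_eq_iff algebra_simps, (intro allI)?, (simp only: cong_def[symmetric]), (intro congI)+)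
qed

lemma CG_exp: assumes "q > 0" "a \<in> carrier (CG (int q) n)"
  shows "a [^]\<^bsub>CG (int q) n\<^esub> (q * q) = \<one>\<^bsub>CG (int q) n\<^esub>"
proof -
  interpret G: group "CG (int q) n" using CG_group assms by simp
  obtain z where az: "a [^]\<^bsub>CG (int q) n\<^esub> q = (\<lambda>_. 0, \<lambda>_. 0, z)"
    using CG_pow_fst[OF _ assms(2), of q] assms(1)
    by (cases "a [^]\<^bsub>CG (int q) n\<^esub> q") (auto simp: fun_eq_iff)
  have c: "(\<lambda>_. 0, \<lambda>_. 0, z) \<in> carrier (CG (int q) n)" using az[symmetric] assms(2) by simp
  have "a [^]\<^bsub>CG (int q) n\<^esub> (q * q) = (a [^]\<^bsub>CG (int q) n\<^esub> q) [^]\<^bsub>CG (int q) n\<^esub> q"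
    using assms by (simp add: G.nat_pow_pow)
  also have "\<dots> = \<one>\<^bsub>CG (int q) n\<^esub>" using CG_pow_center[OF _ c, of q] assms
    by (simp add: az CG_one)
  finally show ?thesis .
qed



primrec cp :: "('a,'b) monoid_scheme \<Rightarrow> nat \<Rightarrow> 'a set" where
  "cp G 0 = {\<one>\<^bsub>G\<^esub>}"
| "cp G (Suc k) = {c \<otimes>\<^bsub>G\<^esub> g | c g. c \<in> derived_set G (carrier G) \<and> g \<in> cp G k}"

context group begin

lemma cp_carrier: "cp G k \<subseteq> carrier G"
  by (induction k) (auto simp: derived_set_in_carrier)

lemma comm_in_carrier: "c \<in> derived_set G (carrier G) \<Longrightarrow> c \<in> carrier G"
  by auto

lemma cp_mult: "a \<in> cp G k \<Longrightarrow> b \<in> cp G l \<Longrightarrow> a \<otimes> b \<in> cp G (k + l)"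
proof (induction k arbitrary: a)
  case 0
  then have "b \<in> carrier G" using cp_carrier by blast
  then show ?case using 0 by simp
next
  case (Suc k)
  then obtain c g where a: "a = c \<otimes> g" "c \<in> derived_set G (carrier G)" "g \<in> cp G k" by auto
  have "g \<otimes> b \<in> cp G (k + l)" using Suc a by auto
  moreover have "a \<otimes> b = c \<otimes> (g \<otimes> b)"
  proof -
    have "c \<in> carrier G" "g \<in> carrier G" "b \<in> carrier G" using a cp_carrier Suc.prems(2) comm_in_carrier by blast+
    then show ?thesis using a(1) by (simp add: m_assoc)
  qed
  ultimately show ?case using a by auto
qed

lemma comm_inv: assumes "c \<in> derived_set G (carrier G)" shows "inv c \<in> derived_set G (carrier G)"
proof -
  obtain a b where ab: "a \<in> carrier G" "b \<in> carrier G" "c = a \<otimes> b \<otimes> inv a \<otimes> inv b" using assms by auto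
  have "inv c = b \<otimes> a \<otimes> inv b \<otimes> inv a"
    using ab by (simp add: inv_mult_group m_assoc)
  then show ?thesis using ab by blast
qed

lemma one_comm: "\<one> \<in> derived_set G (carrier G)"
proof -
  have "\<one> = \<one> \<otimes> \<one> \<otimes> inv \<one> \<otimes> inv \<one>" by simp
  then show ?thesis by blast
qed

lemma cp_Suc_mono: "cp G k \<subseteq> cp G (Suc k)"
proof
  fix x assume "x \<in> cp G k"
  moreover have "x \<in> carrier G" using \<open>x \<in> cp G k\<close> cp_carrier by blast
  ultimately have "x = \<one> \<otimes> x" "x \<in> cp G k" by auto
  then show "x \<in> cp G (Suc k)" using one_comm by auto
qed

lemma cp_mono: "k \<le> l \<Longrightarrow> cp G k \<subseteq> cp G l"
proof (induction l)
  case 0 then show ?case by simp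
next
  case (Suc l)
  show ?case
  proof (cases "k = Suc l")
    case False
    then have "cp G k \<subseteq> cp G l" using Suc by simp
    then show ?thesis using cp_Suc_mono[of l] by blast
  qed simp
qed

lemma derived_cp: "x \<in> derived G (carrier G) \<Longrightarrow> \<exists>k. x \<in> cp G k"
  unfolding derived_def
proof (induction rule: generate.induct)
  case one then show ?case by (metis cp.simps(1) singletonI)
next
  case (incl h)
  then have "h \<otimes> \<one> \<in> cp G (Suc 0)" by auto
  moreover have "h \<in> carrier G" using incl comm_in_carrier by blast
  ultimately show ?case by (metis r_one)
next
  case (inv h)
  have d: "inv h \<in> derived_set G (carrier G)" using comm_inv inv by blast
  have c: "inv h \<in> carrier G" using comm_in_carrier d by blast
  have "inv h \<otimes> \<one> \<in> cp G (Suc 0)" unfolding cp.simps using d by blast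
  then show ?case using c by (metis r_one)
next
  case (eng h1 h2)
  then show ?case using cp_mult by blast
qed

end

lemma derived_set_product:
  assumes "\<And>i. group (G i)" "c \<in> derived_set (product_group UNIV G) (carrier (product_group UNIV G))"
  shows "c i \<in> derived_set (G i) (carrier (G i))"
proof -
  obtain a b where ab: "a \<in> carrier (product_group UNIV G)" "b \<in> carrier (product_group UNIV G)"
    "c = a \<otimes>\<^bsub>product_group UNIV G\<^esub> b \<otimes>\<^bsub>product_group UNIV G\<^esub> inv\<^bsub>product_group UNIV G\<^esub> a
        \<otimes>\<^bsub>product_group UNIV G\<^esub> inv\<^bsub>product_group UNIV G\<^esub> b" using assms(2) by auto
  have "c i = a i \<otimes>\<^bsub>G i\<^esub> b i \<otimes>\<^bsub>G i\<^esub> inv\<^bsub>G i\<^esub> (a i) \<otimes>\<^bsub>G i\<^esub> inv\<^bsub>G i\<^esub> (b i)"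
    using ab assms(1) by simp
  moreover have "a i \<in> carrier (G i)" "b i \<in> carrier (G i)" using ab by auto
  ultimately show ?thesis by blast
qed

lemma cp_product:
  assumes "\<And>i. group (G i)" "x \<in> cp (product_group UNIV G) k"
  shows "x i \<in> cp (G i) k"
  using assms(2)
proof (induction k arbitrary: x)
  case 0 then show ?case by simp
next
  case (Suc k)
  then obtain c g where cg: "x = c \<otimes>\<^bsub>product_group UNIV G\<^esub> g"
    "c \<in> derived_set (product_group UNIV G) (carrier (product_group UNIV G))"
    "g \<in> cp (product_group UNIV G) k" by auto
  have "x i = c i \<otimes>\<^bsub>G i\<^esub> g i" using cg by simp
  moreover have "c i \<in> derived_set (G i) (carrier (G i))" using derived_set_product[OF assms(1) cg(2)] .
  moreover have "g i \<in> cp (G i) k" using Suc cg by auto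
  ultimately show ?case by auto
qed



definition Dset :: "int \<Rightarrow> nat \<Rightarrow> (nat \<times> nat \<Rightarrow> int) set" where
  "Dset p n = {\<lambda>q. a (fst q) * b' (snd q) - a' (fst q) * b (snd q) | a b a' b'.
      a \<in> Vs p n \<and> b \<in> Vs p n \<and> a' \<in> Vs p n \<and> b' \<in> Vs p n}"

definition Wset :: "int \<Rightarrow> nat \<Rightarrow> nat \<Rightarrow> comp set" where
  "Wset p n k = {(\<lambda>_. 0, \<lambda>_. 0, \<lambda>q. (\<Sum>l<k. d l q) mod p) | d. \<forall>l<k. d l \<in> Dset p n}"

lemma cp_CG: assumes "p > 0" shows "cp (CG p n) k \<subseteq> Wset p n k"
proof (induction k)
  case 0
  show ?case by (auto simp: CG_one Wset_def fun_eq_iff)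
next
  case (Suc k)
  show ?case
  proof
    fix x assume "x \<in> cp (CG p n) (Suc k)"
    then obtain c g where cg: "x = c \<otimes>\<^bsub>CG p n\<^esub> g" "c \<in> derived_set (CG p n) (carrier (CG p n))"
      "g \<in> cp (CG p n) k" unfolding cp.simps by blast
    obtain a b where ab: "a \<in> carrier (CG p n)" "b \<in> carrier (CG p n)"
      "c = a \<otimes>\<^bsub>CG p n\<^esub> b \<otimes>\<^bsub>CG p n\<^esub> inv\<^bsub>CG p n\<^esub> a \<otimes>\<^bsub>CG p n\<^esub> inv\<^bsub>CG p n\<^esub> b"
      using cg(2) by auto
    have c: "c = red p (rcomm a b)" using ab CG_comm assms by simp
    obtain d where d: "g = (\<lambda>_. 0, \<lambda>_. 0, \<lambda>q. (\<Sum>l<k. d l q) mod p)" "\<forall>l<k. d l \<in> Dset p n"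
      using Suc cg(3) by (auto simp: Wset_def)
    obtain x1 y1 z1 x2 y2 z2 where a: "a = (x1,y1,z1)" and b: "b = (x2,y2,z2)" by (cases a; cases b)
    define D where "D = (\<lambda>q. x1 (fst q) * y2 (snd q) - x2 (fst q) * y1 (snd q))"
    have DD: "D \<in> Dset p n" using ab a b unfolding D_def Dset_def by (auto simp: CG_def)
    define d' where "d' = (\<lambda>l. case l of 0 \<Rightarrow> D | Suc l \<Rightarrow> d l)"
    have "x = red p (rmul (rcomm a b) g)"
      using cg(1) c by (simp add: CG_def red_rmul1)
    also have "\<dots> = (\<lambda>_. 0, \<lambda>_. 0, \<lambda>q. (\<Sum>l<Suc k. d' l q) mod p)"
      unfolding d(1) a b d'_def
      by (simp del: sum.lessThan_Suc add: red_def rmul_def rcomm_def D_def sum.lessThan_Suc_shift fun_eq_iff mod_simps)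
    finally have xe: "x = (\<lambda>_. 0, \<lambda>_. 0, \<lambda>q. (\<Sum>l<Suc k. d' l q) mod p)" .
    have "\<forall>l<Suc k. d' l \<in> Dset p n"
    proof (intro allI impI)
      fix l assume "l < Suc k"
      then show "d' l \<in> Dset p n" using d(2) DD by (cases l) (auto simp: d'_def)
    qed
    then show "x \<in> Wset p n (Suc k)"
      unfolding Wset_def using xe by blast
  qed
qed

lemma finite_Vs: "p > 0 \<Longrightarrow> finite (Vs p n)" by (simp add: Vs_FS finite_FS)
lemma card_Vs: "p > 0 \<Longrightarrow> card (Vs p n) = nat p ^ n" by (simp add: Vs_FS card_FS)
lemma card_Zs: "p > 0 \<Longrightarrow> card (Zs p n) = nat p ^ (n * n)" by (simp add: Zs_FS card_FS)
lemma finite_Zs: "p > 0 \<Longrightarrow> finite (Zs p n)" by (simp add: Zs_FS finite_FS)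

lemma Dset_card: assumes "p > 0" shows "finite (Dset p n) \<and> card (Dset p n) \<le> (nat p ^ n) ^ 4"
proof -
  let ?V = "Vs p n"
  have sub: "Dset p n \<subseteq> (\<lambda>(a,b,a',b'). \<lambda>q. a (fst q) * b' (snd q) - a' (fst q) * b (snd q)) ` (?V \<times> ?V \<times> ?V \<times> ?V)"
  proof
    fix d assume "d \<in> Dset p n"
    then obtain a b a' b' where "a \<in> ?V" "b \<in> ?V" "a' \<in> ?V" "b' \<in> ?V"
      "d = (\<lambda>q. a (fst q) * b' (snd q) - a' (fst q) * b (snd q))" unfolding Dset_def by blast
    then show "d \<in> (\<lambda>(a,b,a',b'). \<lambda>q. a (fst q) * b' (snd q) - a' (fst q) * b (snd q)) ` (?V \<times> ?V \<times> ?V \<times> ?V)"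
      by (intro image_eqI[where x="(a,b,a',b')"]) auto
  qed
  have fin: "finite (?V \<times> ?V \<times> ?V \<times> ?V)" using finite_Vs assms by simp
  have cd: "card (?V \<times> ?V \<times> ?V \<times> ?V) = (nat p ^ n) ^ 4"
    using assms by (simp add: card_cartesian_product card_Vs power4_eq_xxxx)
  have fi: "finite ((\<lambda>(a,b,a',b'). \<lambda>q. a (fst q) * b' (snd q) - a' (fst q) * b (snd q)) ` (?V \<times> ?V \<times> ?V \<times> ?V))"
    using fin by (rule finite_imageI)
  have "card (Dset p n) \<le> card ((\<lambda>(a,b,a',b'). \<lambda>q. a (fst q) * b' (snd q) - a' (fst q) * b (snd q)) ` (?V \<times> ?V \<times> ?V \<times> ?V))"
    using fi sub by (rule card_mono)
  also have "\<dots> \<le> card (?V \<times> ?V \<times> ?V \<times> ?V)" using fin by (rule card_image_le)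
  finally show ?thesis using cd fi sub finite_subset by auto
qed

lemma Wset_card: assumes "p > 0" shows "card (Wset p n k) \<le> (nat p ^ n) ^ (4 * k)"
proof -
  let ?f = "\<lambda>d. ((\<lambda>_. 0, \<lambda>_. 0, \<lambda>q. (\<Sum>l<k. d l q) mod p) :: comp)"
  have sub: "Wset p n k \<subseteq> ?f ` (PiE {..<k} (\<lambda>_. Dset p n))"
  proof
    fix x assume "x \<in> Wset p n k"
    then obtain d where d: "x = ?f d" "\<forall>l<k. d l \<in> Dset p n" by (auto simp: Wset_def)
    have e: "?f (restrict d {..<k}) = ?f d" by (simp add: fun_eq_iff)
    have m: "restrict d {..<k} \<in> PiE {..<k} (\<lambda>_. Dset p n)" using d by auto
    show "x \<in> ?f ` (PiE {..<k} (\<lambda>_. Dset p n))" unfolding d(1) using m by (intro image_eqI[where x="restrict d {..<k}"]) (auto simp: fun_eq_iff)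
  qed
  have fin: "finite (PiE {..<k} (\<lambda>_. Dset p n))" using Dset_card assms by (simp add: finite_PiE)
  have "card (Wset p n k) \<le> card (?f ` (PiE {..<k} (\<lambda>_. Dset p n)))"
    by (rule card_mono[OF finite_imageI[OF fin] sub])
  also have "\<dots> \<le> card (PiE {..<k} (\<lambda>_. Dset p n))" by (rule card_image_le[OF fin])
  also have "\<dots> = card (Dset p n) ^ k" by (simp add: card_PiE)
  also have "\<dots> \<le> ((nat p ^ n) ^ 4) ^ k" using Dset_card[OF assms] by (simp add: power_mono)
  also have "\<dots> = (nat p ^ n) ^ (4 * k)" by (simp add: power_mult)
  finally show ?thesis .
qed

lemma exists_hard: assumes "p \<ge> 2" "4 * k < n"
  shows "\<exists>z \<in> Zs p n. (\<lambda>_. 0, \<lambda>_. 0, z) \<notin> Wset p n k"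
proof (rule ccontr)
  assume "\<not> ?thesis"
  then have sub: "(\<lambda>z. ((\<lambda>_. 0, \<lambda>_. 0, z) :: comp)) ` Zs p n \<subseteq> Wset p n k" by auto
  have p0: "p > 0" using assms by simp
  have finW: "finite (Wset p n k)"
  proof -
    have "Wset p n k \<subseteq> (\<lambda>d. ((\<lambda>_. 0, \<lambda>_. 0, \<lambda>q. (\<Sum>l<k. d l q) mod p) :: comp)) ` (PiE {..<k} (\<lambda>_. Dset p n))"
    proof
      fix x assume "x \<in> Wset p n k"
      then obtain d where d: "x = (\<lambda>_. 0, \<lambda>_. 0, \<lambda>q. (\<Sum>l<k. d l q) mod p)" "\<forall>l<k. d l \<in> Dset p n" by (auto simp: Wset_def)
      then show "x \<in> (\<lambda>d. ((\<lambda>_. 0, \<lambda>_. 0, \<lambda>q. (\<Sum>l<k. d l q) mod p) :: comp)) ` (PiE {..<k} (\<lambda>_. Dset p n))"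
        by (intro image_eqI[where x="restrict d {..<k}"]) (auto simp: fun_eq_iff)
    qed
    then show ?thesis using Dset_card p0 by (meson finite_PiE finite_imageI finite_lessThan finite_subset)
  qed
  have "card (Zs p n) = card ((\<lambda>z. ((\<lambda>_. 0, \<lambda>_. 0, z) :: comp)) ` Zs p n)"
    by (rule card_image[symmetric]) (auto simp: inj_on_def)
  also have "\<dots> \<le> card (Wset p n k)" using sub finW by (rule card_mono[rotated])
  also have "\<dots> \<le> (nat p ^ n) ^ (4 * k)" using Wset_card p0 by blast
  also have "\<dots> = nat p ^ (n * (4 * k))" by (simp add: power_mult)
  also have "\<dots> < nat p ^ (n * n)"
    using assms by (intro power_strict_increasing) (auto simp: nat_mult_less_cancel1)
  finally show False using card_Zs p0 by simp
qed

lemma center_derived: assumes "p > 0" "z \<in> Zs p n"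
  shows "(\<lambda>_. 0, \<lambda>_. 0, z) \<in> derived (CG p n) (carrier (CG p n))"
proof -
  interpret G: group "CG p n" using CG_group assms by simp
  have sg: "subgroup (derived (CG p n) (carrier (CG p n))) (CG p n)" by (simp add: G.derived_is_subgroup)
  have single: "(\<lambda>_. 0, \<lambda>_. 0, \<lambda>q. if q = (i,j) then c else 0) \<in> derived (CG p n) (carrier (CG p n))"
    if "i < n" "j < n" "0 \<le> c" "c < p" for i j c
  proof -
    define a where "a = ((\<lambda>k. if k = i then c else 0, \<lambda>_. 0, \<lambda>_. 0) :: comp)"
    define b where "b = ((\<lambda>_. 0, \<lambda>k. if k = j then 1 mod p else 0, \<lambda>_. 0) :: comp)"
    have ac: "a \<in> carrier (CG p n)" "b \<in> carrier (CG p n)"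
      using that assms by (auto simp: a_def b_def CG_def Vs_def Zs_def)
    have "red p (rcomm a b) = (\<lambda>_. 0, \<lambda>_. 0, \<lambda>q. if q = (i,j) then c else 0)"
      using that by (auto simp: a_def b_def red_def rcomm_def fun_eq_iff mod_simps)
    then have "(\<lambda>_. 0, \<lambda>_. 0, \<lambda>q. if q = (i,j) then c else 0) \<in> derived_set (CG p n) (carrier (CG p n))"
      using CG_comm[OF assms(1) ac] ac by (metis (no_types, lifting) UN_I singletonI)
    then show ?thesis unfolding derived_def by (rule generate.incl)
  qed
  have fin: "finite ({..<n} \<times> {..<n})" by simp
  have "finite A \<Longrightarrow> A \<subseteq> {..<n} \<times> {..<n} \<Longrightarrow> (\<lambda>_. 0, \<lambda>_. 0, \<lambda>q. if q \<in> A then z q else 0) \<in> derived (CG p n) (carrier (CG p n))" for A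
  proof (induction A rule: finite_induct)
    case empty
    then show ?case using subgroup.one_closed[OF sg] by (simp add: CG_one)
  next
    case (insert a A)
    obtain i j where a: "a = (i,j)" by (cases a)
    have ij: "i < n" "j < n" using insert a by auto
    have zr: "0 \<le> z a" "z a < p" using assms a by (auto simp: Zs_def)
    have e1: "(\<lambda>_. 0, \<lambda>_. 0, \<lambda>q. if q \<in> A then z q else 0) \<in> derived (CG p n) (carrier (CG p n))"
      using insert by auto
    have e2: "(\<lambda>_. 0, \<lambda>_. 0, \<lambda>q. if q = (i,j) then z a else 0) \<in> derived (CG p n) (carrier (CG p n))"
      using single[OF ij zr] .
    have "(\<lambda>_. 0, \<lambda>_. 0, \<lambda>q. if q \<in> A then z q else 0) \<otimes>\<^bsub>CG p n\<^esub> (\<lambda>_. 0, \<lambda>_. 0, \<lambda>q. if q = (i,j) then z a else 0)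
          = (\<lambda>_. 0, \<lambda>_. 0, \<lambda>q. if q \<in> insert a A then z q else 0)"
      using insert(2) assms a by (auto simp: CG_def red_def rmul_def fun_eq_iff Zs_def)
    then show ?case using subgroup.m_closed[OF sg e1 e2] by simp
  qed
  note H = this[OF fin order_refl]
  have E: "(\<lambda>q. if q \<in> {..<n} \<times> {..<n} then z q else 0) = z"
  proof
    fix q show "(if q \<in> {..<n} \<times> {..<n} then z q else 0) = z q"
      using assms(2) by (cases q) (auto simp: Zs_def not_less)
  qed
  show ?thesis using H unfolding E .
qed



definition pp :: "nat \<Rightarrow> int" where "pp m = (if Factorial_Ring.prime m then int m else 1)"
definition Gc :: "nat \<Rightarrow> comp monoid" where "Gc m = CG (pp m) m"
definition Q0 :: "(nat \<Rightarrow> comp) monoid" where "Q0 = product_group UNIV Gc"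

lemma pp_pos: "pp m > 0" by (simp add: pp_def prime_gt_0_nat)
lemma Gc_group: "group (Gc m)" by (simp add: Gc_def CG_group pp_pos)
lemma Q0_group: "group Q0" by (simp add: Q0_def Gc_group)

lemma Gc_finite: "finite (carrier (Gc m))"
  by (simp add: Gc_def CG_def finite_Vs finite_Zs pp_pos)

definition qq :: "nat \<Rightarrow> nat" where "qq m = (if Factorial_Ring.prime m then m else 1)"
lemma pp_qq: "pp m = int (qq m)" by (simp add: pp_def qq_def)
lemma qq_pos: "qq m > 0" by (simp add: qq_def prime_gt_0_nat)

lemma Gc_exp: "g \<in> carrier (Gc m) \<Longrightarrow> g [^]\<^bsub>Gc m\<^esub> (qq m * qq m) = \<one>\<^bsub>Gc m\<^esub>"
  unfolding Gc_def pp_qq by (rule CG_exp[OF qq_pos])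

lemma (in group) pow_mod:
  assumes "g \<in> carrier G" "g [^] (n::nat) = \<one>" shows "g [^] (e::nat) = g [^] (e mod n)"
proof -
  have "g [^] e = g [^] (n * (e div n) + e mod n)" by (metis mult_div_mod_eq)
  also have "\<dots> = (g [^] n) [^] (e div n) \<otimes> g [^] (e mod n)"
    using assms(1) by (simp only: nat_pow_pow nat_pow_mult)
  also have "\<dots> = \<one> \<otimes> g [^] (e mod n)" by (simp only: assms(2) nat_pow_one)
  also have "\<dots> = g [^] (e mod n)" using assms by simp
  finally show ?thesis .
qed

lemma (in group) pow_one_mod:
  assumes "g \<in> carrier G" "g [^] (n::nat) = \<one>" shows "g [^] (1 mod n) = g"
proof (cases "n = 1")
  case True then show ?thesis using assms by (simp add: nat_pow_eone)
next
  case False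
  then have "1 mod n = 1 \<or> n = 0" by (cases n) auto
  then show ?thesis using assms by auto
qed

lemma (in subgroup) pow_closed': assumes "group G" "y \<in> H" shows "y [^]\<^bsub>G\<^esub> (n::nat) \<in> H"
proof (induction n)
  case 0 then show ?case by simp
next
  case (Suc n) then show ?case using assms by (simp add: group.is_monoid monoid.nat_pow_Suc)
qed

lemma (in group) pigeon:
  assumes "subgroup H G" "finite (rcosets H)" "y \<in> carrier G"
  shows "\<exists>d. 0 < d \<and> d \<le> card (rcosets H) \<and> y [^] d \<in> H"
proof -
  let ?N = "card (rcosets H)"
  let ?f = "\<lambda>i::nat. H #> y [^] i"
  have into: "?f ` {..?N} \<subseteq> rcosets H"
    using assms subgroup.subset[OF assms(1)] by (intro image_subsetI rcosetsI) auto
  have "\<not> inj_on ?f {..?N}"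
  proof
    assume "inj_on ?f {..?N}"
    then have "card {..?N} \<le> ?N" using card_inj_on_le[OF _ into assms(2)] by blast
    then show False by simp
  qed
  then obtain i j where ij: "i \<le> ?N" "j \<le> ?N" "i \<noteq> j" "?f i = ?f j"
    unfolding inj_on_def by auto
  have key: "y [^] (b - a) \<in> H" if "a < b" "?f a = ?f b" for a b :: nat
  proof -
    have "y [^] b \<in> H #> y [^] b" by (rule rcos_self[OF nat_pow_closed[OF assms(3)] assms(1)])
    then have "y [^] b \<in> H #> y [^] a" using that by simp
    then have 1: "y [^] b \<otimes> inv (y [^] a) \<in> H"
      by (rule subgroup.rcos_module_imp[OF assms(1) is_group nat_pow_closed[OF assms(3)]])
    have "y [^] (b - a) \<otimes> y [^] a = y [^] (b - a + a)"
      using assms(3) by (rule nat_pow_mult)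
    also have "b - a + a = b" using that by simp
    finally have 2: "y [^] b = y [^] (b - a) \<otimes> y [^] a" by simp
    have "y [^] b \<otimes> inv (y [^] a) = y [^] (b - a) \<otimes> (y [^] a \<otimes> inv (y [^] a))"
      unfolding 2 using assms(3) by (simp only: m_assoc nat_pow_closed inv_closed)
    also have "\<dots> = y [^] (b - a)" using assms(3) by simp
    finally show ?thesis using 1 by simp
  qed
  show ?thesis
  proof (cases "i < j")
    case True then show ?thesis using key[of i j] ij by (intro exI[of _ "j - i"]) auto
  next
    case False then have "j < i" using ij by simp
    then show ?thesis using key[of j i] ij by (intro exI[of _ "i - j"]) auto
  qed
qed

lemma Q0_pow: "x \<in> carrier Q0 \<Longrightarrow> x [^]\<^bsub>Q0\<^esub> (k::nat) = (\<lambda>m. x m [^]\<^bsub>Gc m\<^esub> k)"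
proof (induction k)
  case 0 then show ?case by (simp add: Q0_def)
next
  case (Suc k)
  then show ?case by (simp add: Q0_def fun_eq_iff)
qed

lemma Q0_strongly_complete:
  assumes H: "subgroup H Q0" "finite (rcosets\<^bsub>Q0\<^esub> H)"
  shows "\<exists>N. \<forall>x \<in> carrier Q0. (\<forall>m\<le>N. x m = \<one>\<^bsub>Gc m\<^esub>) \<longrightarrow> x \<in> H"
proof -
  interpret Q: group Q0 by (rule Q0_group)
  define N where "N = card (rcosets\<^bsub>Q0\<^esub> H)"
  define K where "K = (fact N :: nat)"
  have cop: "coprime K (qq m * qq m)" if "m > N" for m
  proof (cases "Factorial_Ring.prime m")
    case True
    then have "\<not> m dvd K" using that by (simp add: K_def prime_dvd_fact_iff)
    then have "coprime K m" using True by (metis coprime_commute prime_imp_coprime)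
    then show ?thesis using True by (simp add: qq_def)
  next
    case False then show ?thesis by (simp add: qq_def)
  qed
  have "\<exists>a. [K * a = Suc 0] (mod (qq m * qq m))" if "m > N" for m
    using cong_solve_coprime_nat[OF cop[OF that]] by blast
  then obtain a where a: "\<And>m. m > N \<Longrightarrow> [K * a m = Suc 0] (mod (qq m * qq m))" by metis
  show ?thesis
  proof (intro exI ballI impI)
    fix x assume x: "x \<in> carrier Q0" "\<forall>m\<le>N. x m = \<one>\<^bsub>Gc m\<^esub>"
    define y where "y = (\<lambda>m. if m \<le> N then \<one>\<^bsub>Gc m\<^esub> else x m [^]\<^bsub>Gc m\<^esub> a m)"
    have xm: "x m \<in> carrier (Gc m)" for m using x by (auto simp: Q0_def)
    have yc: "y \<in> carrier Q0"
    proof -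
      have "y m \<in> carrier (Gc m)" for m
        using xm[of m] monoid.nat_pow_closed[OF group.is_monoid[OF Gc_group], of "x m" m "a m"]
          monoid.one_closed[OF group.is_monoid[OF Gc_group], of m]
        by (simp add: y_def)
      then show ?thesis by (auto simp: Q0_def PiE_def extensional_def)
    qed
    have yK: "y [^]\<^bsub>Q0\<^esub> K = x"
    proof -
      have "y m [^]\<^bsub>Gc m\<^esub> K = x m" for m
      proof (cases "m \<le> N")
        case True then show ?thesis using x monoid.nat_pow_one[OF group.is_monoid[OF Gc_group]] by (simp add: y_def)
      next
        case False
        interpret G: group "Gc m" by (rule Gc_group)
        have "y m [^]\<^bsub>Gc m\<^esub> K = x m [^]\<^bsub>Gc m\<^esub> (K * a m)"
          using False xm by (simp add: y_def G.nat_pow_pow mult.commute)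
        also have "\<dots> = x m [^]\<^bsub>Gc m\<^esub> ((K * a m) mod (qq m * qq m))"
          using G.pow_mod[OF xm Gc_exp[OF xm]] by blast
        also have "(K * a m) mod (qq m * qq m) = 1 mod (qq m * qq m)"
          using a[of m] False by (simp add: cong_def)
        also have "x m [^]\<^bsub>Gc m\<^esub> (1 mod (qq m * qq m)) = x m"
          using G.pow_one_mod[OF xm Gc_exp[OF xm]] .
        finally show ?thesis .
      qed
      then show ?thesis using Q0_pow[OF yc] by (simp add: fun_eq_iff)
    qed
    obtain d where d: "0 < d" "d \<le> N" "y [^]\<^bsub>Q0\<^esub> d \<in> H"
      using Q.pigeon[OF H yc] N_def by blast
    have "d dvd K" using d by (simp add: K_def dvd_fact)
    then have "y [^]\<^bsub>Q0\<^esub> K = (y [^]\<^bsub>Q0\<^esub> d) [^]\<^bsub>Q0\<^esub> (K div d)"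
      using yc by (simp add: Q.nat_pow_pow)
    then show "x \<in> H" using yK subgroup.pow_closed'[OF H(1) Q0_group d(3)] by simp
  qed
qed



definition T0 :: "(nat \<Rightarrow> comp) topology" where
  "T0 = product_topology (\<lambda>m. discrete_topology (carrier (Gc m))) UNIV"

lemma topspace_T0: "topspace T0 = carrier Q0"
  by (simp add: T0_def Q0_def)

definition hz :: "nat \<Rightarrow> nat \<times> nat \<Rightarrow> int" where
  "hz m = (SOME z. z \<in> Zs (pp m) m \<and> (\<lambda>_. 0, \<lambda>_. 0, z) \<notin> Wset (pp m) m ((m - 1) div 4))"

definition gg :: "nat \<Rightarrow> comp" where
  "gg m = (if Factorial_Ring.prime m then (\<lambda>_. 0, \<lambda>_. 0, hz m) else \<one>\<^bsub>Gc m\<^esub>)"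

lemma hz_prop: assumes "Factorial_Ring.prime m"
  shows "hz m \<in> Zs (pp m) m \<and> (\<lambda>_. 0, \<lambda>_. 0, hz m) \<notin> Wset (pp m) m ((m - 1) div 4)"
proof -
  have m2: "m \<ge> 2" using assms prime_ge_2_nat by blast
  have "pp m \<ge> 2" using assms m2 by (simp add: pp_def)
  moreover have "4 * ((m - 1) div 4) < m" using m2 by linarith
  ultimately obtain z where "z \<in> Zs (pp m) m" "(\<lambda>_. 0, \<lambda>_. 0, z) \<notin> Wset (pp m) m ((m - 1) div 4)"
    using exists_hard by blast
  then have "\<exists>z. z \<in> Zs (pp m) m \<and> (\<lambda>_. 0, \<lambda>_. 0, z) \<notin> Wset (pp m) m ((m - 1) div 4)" by blast
  then show ?thesis unfolding hz_def by (rule someI_ex)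
qed

lemma gg_derived: "gg m \<in> derived (Gc m) (carrier (Gc m))"
proof (cases "Factorial_Ring.prime m")
  case True
  then show ?thesis using hz_prop[OF True] center_derived[OF pp_pos] by (simp add: gg_def Gc_def)
next
  case False
  interpret G: group "Gc m" by (rule Gc_group)
  show ?thesis using False subgroup.one_closed[OF G.derived_is_subgroup[OF order_refl]]
    by (simp add: gg_def)
qed

lemma gg_carrier: "gg m \<in> carrier (Gc m)"
proof -
  interpret G: group "Gc m" by (rule Gc_group)
  show ?thesis using gg_derived G.derived_in_carrier[OF order_refl] by blast
qed

lemma gg_Q0: "gg \<in> carrier Q0" using gg_carrier by (auto simp: Q0_def PiE_def extensional_def)

lemma gg_not_derived: "gg \<notin> derived Q0 (carrier Q0)"
proof
  assume "gg \<in> derived Q0 (carrier Q0)"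
  then obtain k where k: "gg \<in> cp Q0 k" using group.derived_cp[OF Q0_group] by blast
  obtain m where m: "Factorial_Ring.prime m" "m > 4 * k + 1" using bigger_prime by blast
  have "gg m \<in> cp (Gc m) k" using cp_product[OF Gc_group] k by (simp add: Q0_def)
  moreover have "k \<le> (m - 1) div 4" using m by linarith
  ultimately have "gg m \<in> cp (Gc m) ((m - 1) div 4)" using group.cp_mono[OF Gc_group] by blast
  then have "gg m \<in> Wset (pp m) m ((m - 1) div 4)" using cp_CG[OF pp_pos] by (auto simp: Gc_def)
  then show False using hz_prop[OF m(1)] m(1) by (simp add: gg_def)
qed

definition iota :: "nat \<Rightarrow> comp \<Rightarrow> nat \<Rightarrow> comp" where
  "iota a x = (\<lambda>m. if m = a then x else \<one>\<^bsub>Gc m\<^esub>)"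

lemma iota_hom: "group_hom (Gc a) Q0 (iota a)"
proof -
  have "iota a \<in> hom (Gc a) Q0"
  proof (rule homI)
    fix x assume "x \<in> carrier (Gc a)"
    then show "iota a x \<in> carrier Q0"
      by (auto simp: iota_def Q0_def PiE_def extensional_def group.is_monoid[OF Gc_group])
  next
    fix x y assume "x \<in> carrier (Gc a)" "y \<in> carrier (Gc a)"
    then show "iota a (x \<otimes>\<^bsub>Gc a\<^esub> y) = iota a x \<otimes>\<^bsub>Q0\<^esub> iota a y"
      by (auto simp: iota_def Q0_def fun_eq_iff group.is_monoid[OF Gc_group])
  qed
  then show ?thesis using Gc_group Q0_group by (simp add: group_hom_def group_hom_axioms_def)
qed

lemma iota_derived: "x \<in> derived (Gc a) (carrier (Gc a)) \<Longrightarrow> iota a x \<in> derived Q0 (carrier Q0)"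
proof -
  assume x: "x \<in> derived (Gc a) (carrier (Gc a))"
  interpret h: group_hom "Gc a" Q0 "iota a" by (rule iota_hom)
  have "iota a x \<in> derived Q0 (iota a ` carrier (Gc a))"
    using h.derived_img[OF order_refl] x by blast
  moreover have "derived Q0 (iota a ` carrier (Gc a)) \<subseteq> derived Q0 (carrier Q0)"
    using h.H.mono_derived h.hom_closed by blast
  ultimately show ?thesis by blast
qed

lemma trunc_derived: "finite J \<Longrightarrow> (\<lambda>m. if m \<in> J then gg m else \<one>\<^bsub>Gc m\<^esub>) \<in> derived Q0 (carrier Q0)"
proof (induction J rule: finite_induct)
  case empty
  interpret Q: group Q0 by (rule Q0_group)
  show ?case using subgroup.one_closed[OF Q.derived_is_subgroup[OF order_refl]] by (simp add: Q0_def restrict_def)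
next
  case (insert a J)
  interpret Q: group Q0 by (rule Q0_group)
  have e: "(\<lambda>m. if m \<in> insert a J then gg m else \<one>\<^bsub>Gc m\<^esub>)
        = (\<lambda>m. if m \<in> J then gg m else \<one>\<^bsub>Gc m\<^esub>) \<otimes>\<^bsub>Q0\<^esub> iota a (gg a)"
    using insert(2) gg_carrier by (auto simp: Q0_def iota_def fun_eq_iff group.is_monoid[OF Gc_group])
  show ?case unfolding e
    using subgroup.m_closed[OF Q.derived_is_subgroup[OF order_refl] insert(3) iota_derived[OF gg_derived]] .
qed

lemma Q0_not_closed: "\<not> closedin T0 (derived Q0 (carrier Q0))"
proof
  assume c: "closedin T0 (derived Q0 (carrier Q0))"
  then have "openin T0 (topspace T0 - derived Q0 (carrier Q0))" by (rule openin_diff[OF openin_topspace])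
  moreover have "gg \<in> topspace T0 - derived Q0 (carrier Q0)" using gg_Q0 gg_not_derived topspace_T0 by simp
  ultimately obtain U where U: "finite {i \<in> UNIV. U i \<noteq> topspace (discrete_topology (carrier (Gc i)))}"
    "\<forall>i\<in>UNIV. openin (discrete_topology (carrier (Gc i))) (U i)" "gg \<in> PiE UNIV U"
    "PiE UNIV U \<subseteq> topspace T0 - derived Q0 (carrier Q0)"
    unfolding T0_def openin_product_topology_alt by blast
  define J where "J = {i \<in> UNIV. U i \<noteq> topspace (discrete_topology (carrier (Gc i)))}"
  have "(\<lambda>m. if m \<in> J then gg m else \<one>\<^bsub>Gc m\<^esub>) \<in> PiE UNIV U"
    using U(3) by (auto simp: J_def PiE_def extensional_def group.is_monoid[OF Gc_group])
  moreover have "(\<lambda>m. if m \<in> J then gg m else \<one>\<^bsub>Gc m\<^esub>) \<in> derived Q0 (carrier Q0)"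
  proof -
    have "finite J" using U(1) J_def by simp
    then show ?thesis by (rule trunc_derived)
  qed
  ultimately show False using U(4) by blast
qed



lemma Q0_mult: "x \<otimes>\<^bsub>Q0\<^esub> y = (\<lambda>i. x i \<otimes>\<^bsub>Gc i\<^esub> y i)" by (simp add: Q0_def restrict_def)
lemma Q0_inv: "x \<in> carrier Q0 \<Longrightarrow> inv\<^bsub>Q0\<^esub> x = (\<lambda>i. inv\<^bsub>Gc i\<^esub> x i)"
  unfolding Q0_def by (subst inv_product_group) (auto simp: Gc_group restrict_def)

lemma proj_cont: "continuous_map T0 (discrete_topology (carrier (Gc k))) (\<lambda>x. x k)"
  unfolding T0_def by (rule continuous_map_product_projection) simp

lemma cont_T0: "continuous_map Z T0 f \<longleftrightarrow> (\<forall>k. continuous_map Z (discrete_topology (carrier (Gc k))) (\<lambda>x. f x k))"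
  unfolding T0_def by (rule continuous_map_componentwise_UNIV)

lemma Q0_topgroup: "topological_group Q0 T0"
  unfolding topological_group_def
proof (intro conjI)
  show "group Q0" by (rule Q0_group)
  show "topspace T0 = carrier Q0" by (rule topspace_T0)
  show "continuous_map (prod_topology T0 T0) T0 (\<lambda>(x, y). x \<otimes>\<^bsub>Q0\<^esub> y)"
    unfolding cont_T0
  proof
    fix k
    have c1: "continuous_map (prod_topology T0 T0)
        (prod_topology (discrete_topology (carrier (Gc k))) (discrete_topology (carrier (Gc k))))
        (\<lambda>p. (fst p k, snd p k))"
    proof -
      have f1: "continuous_map (prod_topology T0 T0) (discrete_topology (carrier (Gc k))) (\<lambda>p. fst p k)"
        by (rule continuous_map_compose[OF continuous_map_fst proj_cont, unfolded o_def])
      have f2: "continuous_map (prod_topology T0 T0) (discrete_topology (carrier (Gc k))) (\<lambda>p. snd p k)"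
        by (rule continuous_map_compose[OF continuous_map_snd proj_cont, unfolded o_def])
      show ?thesis unfolding continuous_map_paired using f1 f2 by (rule conjI)
    qed
    have c2: "continuous_map (prod_topology (discrete_topology (carrier (Gc k))) (discrete_topology (carrier (Gc k))))
        (discrete_topology (carrier (Gc k))) (\<lambda>(a, b). a \<otimes>\<^bsub>Gc k\<^esub> b)"
      unfolding prod_topology_discrete_topology[symmetric] continuous_map_from_discrete_topology
      using group.subgroup_self[OF Gc_group] subgroup.m_closed by fastforce
    have "continuous_map (prod_topology T0 T0) (discrete_topology (carrier (Gc k)))
        ((\<lambda>(a, b). a \<otimes>\<^bsub>Gc k\<^esub> b) \<circ> (\<lambda>p. (fst p k, snd p k)))"
      by (rule continuous_map_compose[OF c1 c2])
    moreover have "((\<lambda>(a, b). a \<otimes>\<^bsub>Gc k\<^esub> b) \<circ> (\<lambda>p. (fst p k, snd p k)))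
        = (\<lambda>p. (case p of (x, y) \<Rightarrow> x \<otimes>\<^bsub>Q0\<^esub> y) k)"
      by (rule ext) (simp add: Q0_mult split: prod.splits)
    ultimately show "continuous_map (prod_topology T0 T0) (discrete_topology (carrier (Gc k)))
        (\<lambda>p. (case p of (x, y) \<Rightarrow> x \<otimes>\<^bsub>Q0\<^esub> y) k)"
      by simp
  qed
  show "continuous_map T0 T0 (\<lambda>x. inv\<^bsub>Q0\<^esub> x)"
  proof (rule continuous_map_eq[where f="\<lambda>x. (\<lambda>i. inv\<^bsub>Gc i\<^esub> x i)"])
    show "continuous_map T0 T0 (\<lambda>x i. inv\<^bsub>Gc i\<^esub> x i)"
      unfolding cont_T0
    proof
      fix k
      have c2: "continuous_map (discrete_topology (carrier (Gc k))) (discrete_topology (carrier (Gc k)))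
          (\<lambda>a. inv\<^bsub>Gc k\<^esub> a)"
        using group.inv_closed[OF Gc_group] by simp
      show "continuous_map T0
          (discrete_topology (carrier (Gc k))) (\<lambda>x. inv\<^bsub>Gc k\<^esub> x k)"
        using continuous_map_compose[OF proj_cont c2] by (simp add: o_def)
    qed
    show "\<And>x. x \<in> topspace T0 \<Longrightarrow> (\<lambda>i. inv\<^bsub>Gc i\<^esub> x i) = inv\<^bsub>Q0\<^esub> x"
      using Q0_inv topspace_T0 by simp
  qed
qed

lemma T0_compact: "compact_space T0"
  unfolding T0_def compact_space_product_topology
  by (simp add: compact_space_discrete_topology Gc_finite)

lemma T0_Hausdorff: "Hausdorff_space T0"
  unfolding T0_def Hausdorff_space_product_topology by simp

lemma T0_td: "totally_disconnected_space T0"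
  unfolding totally_disconnected_space_def
proof (intro allI impI)
  fix S assume S: "S \<subseteq> topspace T0 \<and> connectedin T0 S"
  show "\<exists>a. S \<subseteq> {a}"
  proof (cases "S = {}")
    case False
    then obtain a where a: "a \<in> S" by blast
    have "b = a" if b: "b \<in> S" for b
    proof
      fix k
      have "connectedin (discrete_topology (carrier (Gc k))) ((\<lambda>x. x k) ` S)"
        using connectedin_continuous_map_image[OF proj_cont] S by blast
      then obtain c where "(\<lambda>x. x k) ` S \<subseteq> {c}" unfolding connectedin_discrete_topology by blast
      then show "b k = a k" using a b by blast
    qed
    then show ?thesis by blast
  qed simp
qed

lemma T0_strongly_complete: "strongly_complete Q0 T0"
  unfolding strongly_complete_def
proof (intro allI impI)
  fix H assume H: "subgroup H Q0 \<and> finite (rcosets\<^bsub>Q0\<^esub> H)"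
  interpret Q: group Q0 by (rule Q0_group)
  obtain N where N: "\<forall>x \<in> carrier Q0. (\<forall>m\<le>N. x m = \<one>\<^bsub>Gc m\<^esub>) \<longrightarrow> x \<in> H"
    using Q0_strongly_complete H by blast
  show "openin T0 H"
    unfolding openin_subopen[of T0 H]
  proof
    fix h assume h: "h \<in> H"
    have hc: "h \<in> carrier Q0" using h H subgroup.subset by blast
    then have hm: "h m \<in> carrier (Gc m)" for m by (auto simp: Q0_def)
    define U where "U = (\<lambda>m. if m \<le> N then {h m} else carrier (Gc m))"
    have "openin T0 (PiE UNIV U)"
      unfolding T0_def openin_PiE_gen
    proof (rule disjI2, intro conjI ballI)
      show "finite {i \<in> UNIV. U i \<noteq> topspace (discrete_topology (carrier (Gc i)))}"
        by (rule finite_subset[of _ "{..N}"]) (auto simp: U_def)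
      fix i show "openin (discrete_topology (carrier (Gc i))) (U i)"
        using hm by (simp add: U_def)
    qed
    moreover have "h \<in> PiE UNIV U" using hm by (auto simp: U_def PiE_def extensional_def)
    moreover have "PiE UNIV U \<subseteq> H"
    proof
      fix x assume x: "x \<in> PiE UNIV U"
      have "x m \<in> carrier (Gc m)" for m
      proof -
        have "x m \<in> U m" using PiE_mem[OF x] by simp
        then show ?thesis using hm[of m] by (cases "m \<le> N") (auto simp: U_def)
      qed
      then have xc: "x \<in> carrier Q0" by (auto simp: Q0_def PiE_def extensional_def)
      have zc: "inv\<^bsub>Q0\<^esub> h \<otimes>\<^bsub>Q0\<^esub> x \<in> carrier Q0" using hc xc by simp
      have "(inv\<^bsub>Q0\<^esub> h \<otimes>\<^bsub>Q0\<^esub> x) m = \<one>\<^bsub>Gc m\<^esub>" if "m \<le> N" for m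
      proof -
        have "x m \<in> U m" using PiE_mem[OF x] by simp
        then have "x m = h m" using that by (simp add: U_def)
        then show ?thesis using hm[of m] group.l_inv[OF Gc_group]
          by (simp add: Q0_mult Q0_inv[OF hc])
      qed
      then have "inv\<^bsub>Q0\<^esub> h \<otimes>\<^bsub>Q0\<^esub> x \<in> H" using N zc by blast
      then have "h \<otimes>\<^bsub>Q0\<^esub> (inv\<^bsub>Q0\<^esub> h \<otimes>\<^bsub>Q0\<^esub> x) \<in> H"
        by (rule subgroup.m_closed[OF H[THEN conjunct1] h])
      moreover have "h \<otimes>\<^bsub>Q0\<^esub> (inv\<^bsub>Q0\<^esub> h \<otimes>\<^bsub>Q0\<^esub> x) = x"
      proof -
        have "h \<otimes>\<^bsub>Q0\<^esub> (inv\<^bsub>Q0\<^esub> h \<otimes>\<^bsub>Q0\<^esub> x) = (h \<otimes>\<^bsub>Q0\<^esub> inv\<^bsub>Q0\<^esub> h) \<otimes>\<^bsub>Q0\<^esub> x"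
          using hc xc by (simp only: Q.m_assoc Q.inv_closed)
        then show ?thesis using hc xc by simp
      qed
      ultimately show "x \<in> H" by simp
    qed
    ultimately show "\<exists>T. openin T0 T \<and> h \<in> T \<and> T \<subseteq> H" by blast
  qed
qed

lemma Q0_main: "profinite_group Q0 T0 \<and> strongly_complete Q0 T0 \<and> \<not> closedin T0 (derived Q0 (carrier Q0))"
  using Q0_topgroup T0_compact T0_Hausdorff T0_td T0_strongly_complete Q0_not_closed
  by (simp add: profinite_group_def)



definition tmon :: "'a monoid \<Rightarrow> ('a \<Rightarrow> 'b) \<Rightarrow> 'b monoid" where
  "tmon G f = \<lparr>carrier = f ` carrier G,
     mult = (\<lambda>a b. f (inv_into (carrier G) f a \<otimes>\<^bsub>G\<^esub> inv_into (carrier G) f b)),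
     one = f \<one>\<^bsub>G\<^esub>\<rparr>"

definition ttop :: "'a monoid \<Rightarrow> ('a \<Rightarrow> 'b) \<Rightarrow> 'a topology \<Rightarrow> 'b topology" where
  "ttop G f T = pullback_topology (f ` carrier G) (inv_into (carrier G) f) T"

lemma transport:
  fixes G :: "'a monoid" and f :: "'a \<Rightarrow> 'b" and T :: "'a topology"
  assumes inj: "inj_on f (carrier G)"
    and P: "profinite_group G T \<and> strongly_complete G T \<and> \<not> closedin T (derived G (carrier G))"
  shows "profinite_group (tmon G f) (ttop G f T) \<and> strongly_complete (tmon G f) (ttop G f T)
         \<and> \<not> closedin (ttop G f T) (derived (tmon G f) (carrier (tmon G f)))"
proof -
  define g where "g = inv_into (carrier G) f"
  define H where "H = tmon G f"
  define T' where "T' = ttop G f T"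
  have grp: "group G" and tsp: "topspace T = carrier G"
    and cm: "continuous_map (prod_topology T T) T (\<lambda>(x, y). x \<otimes>\<^bsub>G\<^esub> y)"
    and ci: "continuous_map T T (\<lambda>x. inv\<^bsub>G\<^esub> x)"
    and cpt: "compact_space T" and hd: "Hausdorff_space T" and td: "totally_disconnected_space T"
    and sc: "strongly_complete G T" and nc: "\<not> closedin T (derived G (carrier G))"
    using P by (auto simp: profinite_group_def topological_group_def)
  interpret G: group G by (rule grp)
  have gf: "\<And>x. x \<in> carrier G \<Longrightarrow> g (f x) = x" unfolding g_def using inj by (simp add: inv_into_f_f)
  have fg: "\<And>y. y \<in> f ` carrier G \<Longrightarrow> f (g y) = y" unfolding g_def by (simp add: f_inv_into_f)
  have gc: "\<And>y. y \<in> f ` carrier G \<Longrightarrow> g y \<in> carrier G" unfolding g_def by (simp add: inv_into_into)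
  have carH: "carrier H = f ` carrier G" by (simp add: H_def tmon_def)
  have mulH: "\<And>a b. a \<otimes>\<^bsub>H\<^esub> b = f (g a \<otimes>\<^bsub>G\<^esub> g b)" by (simp add: H_def tmon_def g_def)
  have oneH: "\<one>\<^bsub>H\<^esub> = f \<one>\<^bsub>G\<^esub>" by (simp add: H_def tmon_def)
  have monH: "monoid H"
  proof (rule monoidI)
    fix x y assume "x \<in> carrier H" "y \<in> carrier H"
    then show "x \<otimes>\<^bsub>H\<^esub> y \<in> carrier H" using gc by (auto simp: carH mulH)
  next
    show "\<one>\<^bsub>H\<^esub> \<in> carrier H" by (simp add: carH oneH)
  next
    fix x y z assume "x \<in> carrier H" "y \<in> carrier H" "z \<in> carrier H"
    then show "x \<otimes>\<^bsub>H\<^esub> y \<otimes>\<^bsub>H\<^esub> z = x \<otimes>\<^bsub>H\<^esub> (y \<otimes>\<^bsub>H\<^esub> z)"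
      using gc gf by (auto simp: carH mulH G.m_assoc)
  next
    fix x assume "x \<in> carrier H"
    then show "\<one>\<^bsub>H\<^esub> \<otimes>\<^bsub>H\<^esub> x = x" "x \<otimes>\<^bsub>H\<^esub> \<one>\<^bsub>H\<^esub> = x"
      using gc gf fg by (auto simp: carH mulH oneH)
  qed
  have fhom: "f \<in> hom G H"
    by (rule homI) (auto simp: carH mulH gf)
  have fiso: "f \<in> iso G H"
    unfolding iso_def using fhom inj by (auto simp: bij_betw_def carH)
  have grpH: "group H" using G.iso_imp_group[of H] fiso monH by (auto simp: is_iso_def)
  interpret Hg: group H by (rule grpH)
  have fgh: "group_hom G H f" by (simp add: group_hom_def group_hom_axioms_def grp grpH fhom)
  have ghom: "g \<in> hom H G"
    by (rule homI) (auto simp: carH mulH gf gc)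
  have ggh: "group_hom H G g" by (simp add: group_hom_def group_hom_axioms_def grp grpH ghom)
  have tspT': "topspace T' = f ` carrier G"
    using gc by (auto simp: T'_def ttop_def topspace_pullback_topology g_def[symmetric] tsp)
  have cg: "continuous_map T' T g"
    using continuous_map_pullback[OF continuous_map_id[of T], of "f ` carrier G" g]
    by (simp add: T'_def ttop_def g_def)
  have cf: "continuous_map T T' f"
    unfolding T'_def ttop_def g_def[symmetric]
  proof (rule continuous_map_pullback')
    show "continuous_map T T (g \<circ> f)"
      by (rule continuous_map_eq[OF continuous_map_id]) (simp add: gf tsp)
    show "topspace T \<subseteq> f -` (f ` carrier G)" using tsp by auto
  qed
  have hm: "homeomorphic_maps T T' f g"
    unfolding homeomorphic_maps_def using cf cg gf fg tsp tspT' by auto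
  then have hmap: "homeomorphic_map T T' f" by (rule homeomorphic_maps_imp_map)
  have hs: "T homeomorphic_space T'" using hm homeomorphic_space_def by blast
  have tg: "topological_group H T'"
    unfolding topological_group_def
  proof (intro conjI)
    show "group H" by (rule grpH)
    show "topspace T' = carrier H" by (simp add: tspT' carH)
    have c1: "continuous_map (prod_topology T' T') (prod_topology T T) (\<lambda>(a, b). (g a, g b))"
      unfolding continuous_map_prod_top using cg by blast
    have "continuous_map (prod_topology T' T') T' (f \<circ> (\<lambda>(x, y). x \<otimes>\<^bsub>G\<^esub> y) \<circ> (\<lambda>(a, b). (g a, g b)))"
      by (intro continuous_map_compose[OF c1] continuous_map_compose[OF cm cf])
    moreover have "(f \<circ> (\<lambda>(x, y). x \<otimes>\<^bsub>G\<^esub> y) \<circ> (\<lambda>(a, b). (g a, g b))) = (\<lambda>(x, y). x \<otimes>\<^bsub>H\<^esub> y)"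
      by (auto simp: mulH fun_eq_iff)
    ultimately show "continuous_map (prod_topology T' T') T' (\<lambda>(x, y). x \<otimes>\<^bsub>H\<^esub> y)" by simp
    show "continuous_map T' T' (\<lambda>x. inv\<^bsub>H\<^esub> x)"
    proof (rule continuous_map_eq)
      show "continuous_map T' T' (f \<circ> (\<lambda>x. inv\<^bsub>G\<^esub> x) \<circ> g)"
        by (intro continuous_map_compose[OF cg] continuous_map_compose[OF ci cf])
      fix y assume y: "y \<in> topspace T'"
      then have "inv\<^bsub>H\<^esub> y = inv\<^bsub>H\<^esub> (f (g y))" using fg tspT' by simp
      also have "\<dots> = f (inv\<^bsub>G\<^esub> (g y))" using group_hom.hom_inv[OF fgh] gc y tspT' by simp
      finally show "(f \<circ> (\<lambda>x. inv\<^bsub>G\<^esub> x) \<circ> g) y = inv\<^bsub>H\<^esub> y" by simp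
    qed
  qed
  have tdH: "totally_disconnected_space T'"
    unfolding totally_disconnected_space_def
  proof (intro allI impI)
    fix S assume S: "S \<subseteq> topspace T' \<and> connectedin T' S"
    have "connectedin T (g ` S)" using connectedin_continuous_map_image[OF cg] S by blast
    moreover have "g ` S \<subseteq> topspace T" using S gc tspT' tsp by auto
    ultimately obtain a where a: "g ` S \<subseteq> {a}" using td unfolding totally_disconnected_space_def by blast
    have "S \<subseteq> {f a}"
    proof
      fix y assume "y \<in> S"
      then have "g y = a" "y = f (g y)" using a fg S tspT' by auto
      then show "y \<in> {f a}" by simp
    qed
    then show "\<exists>a. S \<subseteq> {a}" by blast
  qed
  have scH: "strongly_complete H T'"
    unfolding strongly_complete_def
  proof (intro allI impI)
    fix K assume K: "subgroup K H \<and> finite (rcosets\<^bsub>H\<^esub> K)"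
    have Ksub: "K \<subseteq> carrier H" using K subgroup.subset by blast
    have sgK: "subgroup (g ` K) G" using group_hom.subgroup_img_is_subgroup[OF ggh] K by blast
    have "rcosets\<^bsub>G\<^esub> (g ` K) \<subseteq> (\<lambda>C. g ` C) ` (rcosets\<^bsub>H\<^esub> K)"
    proof
      fix C assume "C \<in> rcosets\<^bsub>G\<^esub> (g ` K)"
      then obtain x where x: "x \<in> carrier G" "C = g ` K #>\<^bsub>G\<^esub> x" by (auto simp: RCOSETS_def)
      have "g ` (K #>\<^bsub>H\<^esub> f x) = g ` K #>\<^bsub>G\<^esub> x"
      proof -
        have "g ` (K #>\<^bsub>H\<^esub> f x) = (\<lambda>k. g (k \<otimes>\<^bsub>H\<^esub> f x)) ` K" by (auto simp: r_coset_def)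
        also have "\<dots> = (\<lambda>k. g k \<otimes>\<^bsub>G\<^esub> x) ` K"
          using Ksub x gf gc Hg.m_closed[of _ "f x"]
          by (intro image_cong refl) (auto simp: mulH carH)
        also have "\<dots> = g ` K #>\<^bsub>G\<^esub> x" by (auto simp: r_coset_def)
        finally show ?thesis .
      qed
      moreover have "K #>\<^bsub>H\<^esub> f x \<in> rcosets\<^bsub>H\<^esub> K"
        using x Ksub by (intro Hg.rcosetsI) (auto simp: carH)
      ultimately show "C \<in> (\<lambda>C. g ` C) ` (rcosets\<^bsub>H\<^esub> K)" using x by blast
    qed
    then have "finite (rcosets\<^bsub>G\<^esub> (g ` K))" using K finite_surj by blast
    then have "openin T (g ` K)" using sc sgK unfolding strongly_complete_def by blast
    moreover have "f ` (g ` K) = K" using Ksub fg by (force simp: carH image_image)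
    moreover have "g ` K \<subseteq> topspace T" using Ksub gc tsp carH by auto
    ultimately show "openin T' K" using homeomorphic_map_openness[OF hmap] by metis
  qed
  have dimg: "f ` derived G (carrier G) = derived H (carrier H)"
    using group_hom.derived_img[OF fgh order_refl] by (simp add: carH)
  have ncH: "\<not> closedin T' (derived H (carrier H))"
  proof -
    have "derived G (carrier G) \<subseteq> topspace T" using G.derived_in_carrier[OF order_refl] tsp by simp
    then have "closedin T' (f ` derived G (carrier G)) \<longleftrightarrow> closedin T (derived G (carrier G))"
      by (rule homeomorphic_map_closedness[OF hmap])
    then show ?thesis using nc dimg by simp
  qed
  have "profinite_group H T'"
    unfolding profinite_group_def using tg tdH cpt hd homeomorphic_compact_space[OF hs]
      homeomorphic_Hausdorff_space[OF hs] by simp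
  then show ?thesis using scH ncH unfolding H_def T'_def by simp
qed



definition Fenc :: "(nat \<Rightarrow> comp) \<Rightarrow> nat \<times> nat \<times> nat \<times> nat \<Rightarrow> int" where
  "Fenc e q = (case q of (m, t, i, j) \<Rightarrow>
     (if t = 0 then fst (e m) i else if t = 1 then fst (snd (e m)) i else snd (snd (e m)) (i, j)))"

definition enc :: "(nat \<Rightarrow> comp) \<Rightarrow> nat set set" where
  "enc e = {to_nat ` range (\<lambda>q. (q, Fenc e q))}"

lemma enc_inj: "inj enc"
proof
  fix e1 e2 assume "enc e1 = enc e2"
  then have "to_nat ` range (\<lambda>q. (q, Fenc e1 q)) = to_nat ` range (\<lambda>q. (q, Fenc e2 q))"
    by (simp add: enc_def)
  then have R: "range (\<lambda>q. (q, Fenc e1 q)) = range (\<lambda>q. (q, Fenc e2 q))"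
    by (simp add: inj_image_eq_iff)
  have F: "Fenc e1 q = Fenc e2 q" for q
  proof -
    have "(q, Fenc e1 q) \<in> range (\<lambda>q. (q, Fenc e2 q))" using R by blast
    then show ?thesis by auto
  qed
  show "e1 = e2"
  proof
    fix m
    have "fst (e1 m) i = fst (e2 m) i" for i using F[of "(m, 0, i, 0)"] by (simp add: Fenc_def)
    moreover have "fst (snd (e1 m)) i = fst (snd (e2 m)) i" for i using F[of "(m, 1, i, 0)"] by (simp add: Fenc_def)
    moreover have "snd (snd (e1 m)) (i, j) = snd (snd (e2 m)) (i, j)" for i j
      using F[of "(m, 2, i, j)"] by (simp add: Fenc_def)
    ultimately show "e1 m = e2 m" by (simp add: prod_eq_iff fun_eq_iff)
  qed
qed

theorem proposition1:
  shows "\<exists>(Q :: nat set set monoid) (T :: nat set set topology).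
           profinite_group Q T \<and> strongly_complete Q T \<and>
           \<not> closedin T (derived Q (carrier Q))"
  using transport[OF inj_on_subset[OF enc_inj subset_UNIV] Q0_main] by blast


end
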